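(* Consider an $\mathbb{H}_{2n+1}$-structure on $\mathbb{P}V$ such that $T$ fixes every point of the boundary hyperplane $\mathbb{P}V'$. Let $v$ be the point $\overline{\mathbb{I}\cdot o}\setminus\mathbb{I}\cdot o$ for $o$ in the open orbit, $\hat v\in V$ a nonzero representative, and $\widetilde V=V/\mathbb{C}\hat v$. Then $\mathbb{I}$ (which fixes $v$) acts trivially on $\mathbb{P}\widetilde V$.
   Context: Work over $\mathbb{C}$, $n\ge1$. The Heisenberg group $\mathbb{H}_{2n+1}$ is $\mathbb{W}\times\mathbb{C}$ ($\mathbb{W}$ a $2n$-dimensional space with non-degenerate skew form $\omega$) with law $(w_1,t_1)(w_2,t_2)=(w_1+w_2,t_1+t_2+\tfrac12\omega(w_1,w_2))$; $T=(0,1)$, $\mathbb{I}=\mathbb{C}T$ its center. $V\cong\mathbb{C}^{2n+2}$. An $\mathbb{H}_{2n+1}$-structure on $\mathbb{P}V$ is an effective algebraic action with a dense open orbit, whose boundary (complement of the open orbit) is a hyperplane $\mathbb{P}V'$. The point $v$ lies on the boundary and does not depend on the choice of $o$; projective transformations fixing $v$ preserve the line $\mathbb{C}\hat v$ and so induce projective transformations of $\mathbb{P}\widetilde V$. *)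

theory Defs
  imports "HOL-Analysis.Analysis"
begin

definition heis_mul ::
  "(complex^'k::finite \<Rightarrow> complex^'k \<Rightarrow> complex) \<Rightarrow>
   ((complex^'k) \<times> complex) \<Rightarrow> ((complex^'k) \<times> complex) \<Rightarrow> ((complex^'k) \<times> complex)"
  where "heis_mul \<omega> g h = (fst g + fst h, snd g + snd h + (1/2) * \<omega> (fst g) (fst h))"

definition symplectic_form :: "(complex^'k::finite \<Rightarrow> complex^'k \<Rightarrow> complex) \<Rightarrow> bool" where
  "symplectic_form \<omega> \<longleftrightarrow>
     (\<forall>x y z. \<omega> (x + y) z = \<omega> x z + \<omega> y z) \<and>
     (\<forall>c x z. \<omega> (c *s x) z = c * \<omega> x z) \<and>
     (\<forall>x y. \<omega> x y = - \<omega> y x) \<and>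
     (\<forall>x. (\<forall>y. \<omega> x y = 0) \<longrightarrow> x = 0)"

inductive poly_fun :: "(((complex^'k::finite) \<times> complex) \<Rightarrow> complex) \<Rightarrow> bool" where
  const: "poly_fun (\<lambda>g. c)"
| coord_w: "poly_fun (\<lambda>g. fst g $ i)"
| coord_t: "poly_fun (\<lambda>g. snd g)"
| add: "poly_fun f \<Longrightarrow> poly_fun h \<Longrightarrow> poly_fun (\<lambda>g. f g + h g)"
| mult: "poly_fun f \<Longrightarrow> poly_fun h \<Longrightarrow> poly_fun (\<lambda>g. f g * h g)"

text \<open>Algebraic projective representation of the Heisenberg group on P V,
  given by a (lifted) morphic homomorphism into GL(V).\<close>
definition algebraic_rep ::
  "(complex^'k::finite \<Rightarrow> complex^'k \<Rightarrow> complex) \<Rightarrow>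
   ((complex^'k) \<times> complex \<Rightarrow> complex^'m::finite^'m) \<Rightarrow> bool" where
  "algebraic_rep \<omega> \<rho> \<longleftrightarrow>
     \<rho> (0, 0) = mat 1 \<and>
     (\<forall>g h. \<rho> (heis_mul \<omega> g h) = \<rho> g ** \<rho> h) \<and>
     (\<forall>i j. poly_fun (\<lambda>g. \<rho> g $ i $ j))"

definition fixes_point :: "complex^'m::finite^'m \<Rightarrow> complex^'m \<Rightarrow> bool" where
  "fixes_point A x \<longleftrightarrow> (\<exists>c. A *v x = c *s x)"

definition effective_proj ::
  "((complex^'k::finite) \<times> complex \<Rightarrow> complex^'m::finite^'m) \<Rightarrow> bool" where
  "effective_proj \<rho> \<longleftrightarrow> (\<forall>g. (\<forall>x. fixes_point (\<rho> g) x) \<longrightarrow> g = (0, 0))"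

definition proj_orbit ::
  "((complex^'k::finite) \<times> complex \<Rightarrow> complex^'m::finite^'m) \<Rightarrow> complex^'m \<Rightarrow> complex^'m \<Rightarrow> bool" where
  "proj_orbit \<rho> p x \<longleftrightarrow> (\<exists>g c. c \<noteq> 0 \<and> x = c *s (\<rho> g *v p))"

definition lin_fun :: "complex^'m::finite \<Rightarrow> complex^'m \<Rightarrow> complex" where
  "lin_fun a x = (\<Sum>i\<in>UNIV. a $ i * x $ i)"

end

theory Submission
  imports Defs "HOL-Computational_Algebra.Polynomial"
begin

definition cpoly :: "(complex \<Rightarrow> complex) \<Rightarrow> bool" where
  "cpoly f \<longleftrightarrow> (\<exists>q. \<forall>t. f t = poly q t)"

lemma cpoly_const: "cpoly (\<lambda>t. c)"
  unfolding cpoly_def by (rule exI[of _ "[:c:]"]) simp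

lemma cpoly_id: "cpoly (\<lambda>t. t)"
  unfolding cpoly_def by (rule exI[of _ "[:0,1:]"]) simp

lemma cpoly_add: "cpoly f \<Longrightarrow> cpoly g \<Longrightarrow> cpoly (\<lambda>t. f t + g t)"
  unfolding cpoly_def by (metis poly_add)

lemma cpoly_mult: "cpoly f \<Longrightarrow> cpoly g \<Longrightarrow> cpoly (\<lambda>t. f t * g t)"
  unfolding cpoly_def by (metis poly_mult)

lemma cpoly_diff: "cpoly f \<Longrightarrow> cpoly g \<Longrightarrow> cpoly (\<lambda>t. f t - g t)"
  unfolding cpoly_def by (metis poly_diff)

lemma cpoly_sum: "finite A \<Longrightarrow> (\<And>i. i \<in> A \<Longrightarrow> cpoly (f i)) \<Longrightarrow> cpoly (\<lambda>t. \<Sum>i\<in>A. f i t)"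
proof (induction A rule: finite_induct)
  case empty then show ?case by (simp add: cpoly_const)
next
  case (insert x F) then show ?case by (simp add: cpoly_add)
qed

lemma poly_fun_cpoly: "poly_fun f \<Longrightarrow> cpoly (\<lambda>t. f (0, t))"
proof (induction rule: poly_fun.induct)
  case (const c) then show ?case by (simp add: cpoly_const)
next
  case (coord_w i) then show ?case by (simp add: cpoly_const)
next
  case coord_t then show ?case by (simp add: cpoly_id)
next
  case (add f h) then show ?case by (simp add: cpoly_add)
next
  case (mult f h) then show ?case by (simp add: cpoly_mult)
qed

lemma cpoly_zero_nat:
  assumes "cpoly f" "\<And>m::nat. f (of_nat m) = 0"
  shows "f t = 0"
proof -
  obtain q where q: "\<And>t. f t = poly q t" using assms(1) unfolding cpoly_def by blast
  have "q = 0"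
  proof (rule ccontr)
    assume "q \<noteq> 0"
    then have fin: "finite {x. poly q x = 0}" by (rule poly_roots_finite)
    have "range (of_nat :: nat \<Rightarrow> complex) \<subseteq> {x. poly q x = 0}"
      using assms(2) q by auto
    moreover have "infinite (range (of_nat :: nat \<Rightarrow> complex))"
      by (intro range_inj_infinite) (simp add: inj_on_def)
    ultimately show False using fin finite_subset by blast
  qed
  then show ?thesis using q by simp
qed

lemma cpoly_geom:
  assumes "cpoly f" "\<And>m::nat. f (of_nat m) = \<mu> ^ m * c" "c \<noteq> 0"
  shows "\<mu> = 1"
proof -
  obtain q where q: "\<And>t. f t = poly q t" using assms(1) unfolding cpoly_def by blast
  have "cpoly (\<lambda>t. poly (pcompose q [:1,1:] - smult \<mu> q) t)"
    unfolding cpoly_def by blast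
  moreover have "poly (pcompose q [:1,1:] - smult \<mu> q) (of_nat m) = 0" for m
  proof -
    have "poly (pcompose q [:1,1:] - smult \<mu> q) (of_nat m) = f (of_nat (Suc m)) - \<mu> * f (of_nat m)"
      by (simp add: poly_pcompose q algebra_simps)
    also have "\<dots> = \<mu> ^ (Suc m) * c - \<mu> * (\<mu> ^ m * c)" by (simp only: assms(2))
    also have "\<dots> = 0" by simp
    finally show ?thesis .
  qed
  ultimately have z: "\<And>t. poly (pcompose q [:1,1:] - smult \<mu> q) t = 0"
    using cpoly_zero_nat by blast
  then have eq: "pcompose q [:1,1:] = smult \<mu> q"
  proof -
    have "poly (pcompose q [:1,1:] - smult \<mu> q) = poly 0"
      using \<open>\<And>t. poly (pcompose q [:1,1:] - smult \<mu> q) t = 0\<close> by (intro ext) simp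
    then have "pcompose q [:1,1:] - smult \<mu> q = 0" by (simp only: poly_eq_poly_eq_iff)
    then show ?thesis by simp
  qed
  have "q \<noteq> 0" using assms(2)[of 0] assms(3) q by auto
  have "lead_coeff (pcompose q [:1,1:]) = lead_coeff q"
    by (subst lead_coeff_comp) auto
  then have "lead_coeff q = \<mu> * lead_coeff q" using eq lead_coeff_smult[of \<mu> q] by metis
  then show ?thesis using \<open>q \<noteq> 0\<close> by simp
qed


lemma mv_smult: "(A::complex^'m::finite^'m) *v (c *s x) = c *s (A *v x)"
  by (simp add: vec_eq_iff matrix_vector_mult_def sum_distrib_left algebra_simps)

lemma lin_fun_add: "lin_fun a (x + y) = lin_fun a x + lin_fun a y"
  by (simp add: lin_fun_def sum.distrib algebra_simps)

lemma lin_fun_diff: "lin_fun a (x - y) = lin_fun a x - lin_fun a y"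
  by (simp add: lin_fun_def sum_subtractf algebra_simps)

lemma lin_fun_smult: "lin_fun a (c *s x) = c * lin_fun a x"
  by (simp add: lin_fun_def sum_distrib_left algebra_simps)

lemma cpoly_rhov:
  assumes "algebraic_rep \<omega> \<rho>"
  shows "cpoly (\<lambda>t. (\<rho> (0,t) *v y) $ j)"
proof -
  have "cpoly (\<lambda>t. \<Sum>i\<in>UNIV. \<rho> (0,t) $ j $ i * y $ i)"
    using assms unfolding algebraic_rep_def
    by (intro cpoly_sum cpoly_mult cpoly_const) (auto intro: poly_fun_cpoly)
  then show ?thesis by (simp add: matrix_vector_mult_def)
qed

lemma cpoly_lin:
  assumes "algebraic_rep \<omega> \<rho>"
  shows "cpoly (\<lambda>t. lin_fun a (\<rho> (0,t) *v y))"
  unfolding lin_fun_def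
  by (intro cpoly_sum cpoly_mult cpoly_const cpoly_rhov[OF assms]) auto


theorem lemma2p6:
  fixes n :: nat
    and \<omega> :: "complex^'k::finite \<Rightarrow> complex^'k \<Rightarrow> complex"
    and \<rho> :: "(complex^'k) \<times> complex \<Rightarrow> complex^'m::finite^'m"
    and a :: "complex^'m"
    and p vh :: "complex^'m"
  assumes "n \<ge> 1"
    and "CARD('k) = 2 * n"
    and "CARD('m) = 2 * n + 2"
    and "symplectic_form \<omega>"
    and "algebraic_rep \<omega> \<rho>"
    and "effective_proj \<rho>"
    and "a \<noteq> 0"
    \<comment> \<open>the open orbit is exactly the complement of the hyperplane P V', V' = ker a\<close>
    and "\<forall>x y. lin_fun a x \<noteq> 0 \<longrightarrow> (proj_orbit \<rho> x y \<longleftrightarrow> lin_fun a y \<noteq> 0)"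
    \<comment> \<open>T fixes every point of the boundary hyperplane\<close>
    and "\<forall>x. x \<noteq> 0 \<and> lin_fun a x = 0 \<longrightarrow> fixes_point (\<rho> (0, 1)) x"
    \<comment> \<open>p lies in the open orbit; [vh] is the point of closure(I.p) minus I.p\<close>
    and "lin_fun a p \<noteq> 0"
    and "vh \<noteq> 0"
    and "vh \<in> closure {c *s (\<rho> (0, s) *v p) | c s. c \<noteq> 0}"
    and "\<not> (\<exists>c s. c \<noteq> 0 \<and> vh = c *s (\<rho> (0, s) *v p))"
  shows "\<forall>s. (\<exists>c. \<rho> (0, s) *v vh = c *s vh) \<and>
             (\<forall>x. x \<notin> {d *s vh | d. True} \<longrightarrow>
                 (\<exists>c. \<rho> (0, s) *v x - c *s x \<in> {d *s vh | d. True}))"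
proof -
  note rep = assms(5)
  define P where "P t = \<rho> (0, t)" for t
  define M where "M = P 1"
  define \<alpha> where "\<alpha> = lin_fun a p"
  have \<alpha>0: "\<alpha> \<noteq> 0" using assms(10) by (simp add: \<alpha>_def)
  have \<omega>00: "\<omega> 0 0 = 0"
  proof -
    have "\<omega> (0 *s 0) 0 = 0 * \<omega> 0 0" using assms(4) unfolding symplectic_form_def by blast
    then show ?thesis by simp
  qed
  have P0: "P 0 = mat 1" using rep by (simp add: P_def algebraic_rep_def)
  have Padd: "P (s + t) = P s ** P t" for s t
  proof -
    have "heis_mul \<omega> (0, s) (0, t) = (0, s + t)" by (simp add: heis_mul_def \<omega>00)
    then show ?thesis using rep unfolding algebraic_rep_def P_def by metis
  qed
  have Psuc: "P (of_nat (Suc m)) *v y = M *v (P (of_nat m) *v y)" for m y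
    using Padd[of 1 "of_nat m"] by (simp add: M_def matrix_vector_mul_assoc add.commute)
  have cpP: "cpoly (\<lambda>t. (P t *v y) $ j)" for y j
    unfolding P_def by (rule cpoly_rhov[OF rep])
  have cpL: "cpoly (\<lambda>t. lin_fun a (P t *v y))" for y
    unfolding P_def by (rule cpoly_lin[OF rep])
  have step1: "M *v x = x" if lx: "lin_fun a x = 0" for x
  proof (cases "x = 0")
    case True then show ?thesis by simp
  next
    case False
    then obtain c where c: "M *v x = c *s x"
      using assms(9) lx False unfolding fixes_point_def M_def P_def by blast
    have Pm: "P (of_nat m) *v x = c ^ m *s x" for m
    proof (induction m)
      case 0 then show ?case by (simp add: P0)
    next
      case (Suc m) show ?case by (subst Psuc) (simp add: Suc.IH mv_smult c)
    qed
    from False obtain j where j: "x $ j \<noteq> 0" by (auto simp: vec_eq_iff)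
    have "c = 1"
      by (rule cpoly_geom[OF cpP[of x j], of c "x $ j"]) (auto simp: Pm j)
    then show ?thesis using c by simp
  qed
  define w where "w = (1 / \<alpha>) *s (M *v p - p)"
  have step2: "M *v y = y + lin_fun a y *s w" for y
  proof -
    define r where "r = lin_fun a y / \<alpha>"
    have "lin_fun a (y - r *s p) = 0"
      using \<alpha>0 by (simp add: lin_fun_diff lin_fun_smult r_def \<alpha>_def)
    then have "M *v (y - r *s p) = y - r *s p" by (rule step1)
    then have "M *v y = y - r *s p + r *s (M *v p)"
      by (simp add: matrix_vector_mult_diff_distrib mv_smult algebra_simps)
    then show ?thesis using \<alpha>0
      by (simp add: w_def r_def vec_eq_iff field_simps)
  qed
  define \<beta> where "\<beta> = lin_fun a w"
  have LM: "lin_fun a (M *v y) = (1 + \<beta>) * lin_fun a y" for y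
    by (simp add: step2 lin_fun_add lin_fun_smult \<beta>_def algebra_simps)
  have Lm: "lin_fun a (P (of_nat m) *v p) = (1 + \<beta>) ^ m * \<alpha>" for m
  proof (induction m)
    case 0 then show ?case by (simp add: P0 \<alpha>_def)
  next
    case (Suc m) show ?case by (subst Psuc) (simp add: Suc.IH LM)
  qed
  have "1 + \<beta> = 1"
    by (rule cpoly_geom[OF cpL[of p], of "1 + \<beta>" \<alpha>]) (auto simp: Lm \<alpha>0)
  then have \<beta>0: "lin_fun a w = 0" by (simp add: \<beta>_def)
  have Pmy: "P (of_nat m) *v y = y + (of_nat m * lin_fun a y) *s w" for m y
  proof (induction m)
    case 0 then show ?case by (simp add: P0)
  next
    case (Suc m)
    have L: "lin_fun a (P (of_nat m) *v y) = lin_fun a y"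
      by (simp add: Suc.IH lin_fun_add lin_fun_smult \<beta>0)
    then show ?case
      apply (subst Psuc)
      apply (simp only: step2 L)
      apply (simp add: Suc.IH vec_eq_iff algebra_simps)
      done
  qed
  have Pt: "P t *v y = y + (t * lin_fun a y) *s w" for t y
  proof -
    have "(P t *v y) $ j - (y $ j + t * lin_fun a y * w $ j) = 0" for j
    proof (rule cpoly_zero_nat[where f = "\<lambda>t. (P t *v y) $ j - (y $ j + t * lin_fun a y * w $ j)"])
      show "cpoly (\<lambda>t. (P t *v y) $ j - (y $ j + t * lin_fun a y * w $ j))"
        by (intro cpoly_diff cpoly_add cpoly_mult cpoly_const cpoly_id cpP)
      show "(P (of_nat m) *v y) $ j - (y $ j + of_nat m * lin_fun a y * w $ j) = 0" for m
        by (simp add: Pmy)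
    qed
    then show ?thesis by (simp add: vec_eq_iff)
  qed
  have w0: "w \<noteq> 0"
  proof
    assume "w = 0"
    then have "\<rho> (0, 1) *v x = 1 *s x" for x
      using Pt[of 1 x] by (simp add: P_def vec_eq_iff)
    then have "\<forall>x. fixes_point (\<rho> (0, 1)) x"
      unfolding fixes_point_def by blast
    then have "(0::complex^'k, 1::complex) = (0, 0)" using assms(6) unfolding effective_proj_def by blast
    then show False by simp
  qed
  then obtain j where j: "w $ j \<noteq> 0" by (auto simp: vec_eq_iff)
  \<comment> \<open>Step 6: vh is a multiple of w\<close>
  define C where "C = {x::complex^'m. \<forall>i. x $ i - (lin_fun a x / \<alpha>) * p $ i
      - ((x $ j - (lin_fun a x / \<alpha>) * p $ j) / w $ j) * w $ i = 0}"
  have closedC: "closed C"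
    unfolding C_def lin_fun_def
    using \<alpha>0 j by (intro closed_Collect_all closed_Collect_eq continuous_intros) auto
  have SC: "{c *s (\<rho> (0, s) *v p) | c s. c \<noteq> 0} \<subseteq> C"
  proof
    fix x assume "x \<in> {c *s (\<rho> (0, s) *v p) | c s. c \<noteq> 0}"
    then obtain c s where x: "x = c *s (p + (s * \<alpha>) *s w)"
      using Pt unfolding P_def \<alpha>_def by auto
    have lx: "lin_fun a x = c * \<alpha>"
      by (simp add: x lin_fun_add lin_fun_smult \<beta>0 \<alpha>_def)
    show "x \<in> C" unfolding C_def using \<alpha>0 j
      by (simp add: lx) (simp add: x field_simps)
  qed
  have "vh \<in> C"
    using assms(12) closure_minimal[OF SC closedC] by blast
  define c0 where "c0 = lin_fun a vh / \<alpha>"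
  define d0 where "d0 = (vh $ j - c0 * p $ j) / w $ j"
  have vhcd: "vh = c0 *s p + d0 *s w"
    using \<open>vh \<in> C\<close> j unfolding C_def d0_def
    by (simp add: vec_eq_iff field_simps c0_def)
  have "c0 = 0"
  proof (rule ccontr)
    assume "c0 \<noteq> 0"
    have "vh = c0 *s (\<rho> (0, d0 / (c0 * \<alpha>)) *v p)"
      using Pt[of "d0 / (c0 * \<alpha>)" p] \<open>c0 \<noteq> 0\<close> \<alpha>0 vhcd
      by (simp add: P_def vec_eq_iff field_simps \<alpha>_def)
    then show False using assms(13) \<open>c0 \<noteq> 0\<close> by blast
  qed
  then have vhw: "vh = d0 *s w" using vhcd by simp
  have d00: "d0 \<noteq> 0" using assms(11) vhw by auto
  have lvh: "lin_fun a vh = 0" by (simp add: vhw lin_fun_smult \<beta>0)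
  show ?thesis
  proof (rule allI)
    fix s
    have A: "\<exists>c. \<rho> (0, s) *v vh = c *s vh"
      using Pt[of s vh] lvh by (auto simp: P_def intro: exI[of _ 1])
    have B: "\<forall>x. x \<notin> {d *s vh | d. True} \<longrightarrow>
                 (\<exists>c. \<rho> (0, s) *v x - c *s x \<in> {d *s vh | d. True})"
    proof (intro allI impI exI[of _ 1])
      fix x
      have "\<rho> (0, s) *v x - 1 *s x = ((s * lin_fun a x) / d0) *s vh"
        using Pt[of s x] d00 by (simp add: P_def vhw vec_eq_iff)
      then show "\<rho> (0, s) *v x - 1 *s x \<in> {d *s vh | d. True}" by blast
    qed
    from A B show "(\<exists>c. \<rho> (0, s) *v vh = c *s vh) \<and>
             (\<forall>x. x \<notin> {d *s vh | d. True} \<longrightarrow>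
                 (\<exists>c. \<rho> (0, s) *v x - c *s x \<in> {d *s vh | d. True}))" by (rule conjI)
  qed
qed

end
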